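(* Let $X$ be a unital semiring and $\nu:X\to X$, $\nu(x)=x+x$, and $\nu X=\{a\in X: a=a+a\}$. The following are equivalent: (1) $2=4$ in $X$; (2) $\nu$ is a semiring homomorphism; (3) $\nu\circ\nu=\nu$; (4) the image of $\nu$ equals $\nu X$. If these hold, then $\nu X$ is a unital idempotent semiring with multiplicative unit $\nu(1)$, and the corestriction $X\to\nu X$ of $\nu$ is a unital semiring homomorphism.
   Context: A semiring $(X,+,0,\cdot)$: $(X,+,0)$ commutative monoid, $(X,\cdot)$ semigroup, distributivity, $0$ absorbing; unital: has a multiplicative unit $1$. A natural number $n$ is identified with $1+\dots+1$ ($n$ times) in $X$. A semiring homomorphism preserves addition, zero and multiplication; a unital one also preserves $1$. *)

theory Defs
  imports Main
begin

text \<open>We deliberately do not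
use semiring_1, since that class additionally demands 0 \<noteq> 1.\<close>
class unital_semiring = semiring_0 + monoid_mult

definition nu :: "'a::unital_semiring \<Rightarrow> 'a" where
  "nu x = x + x"

definition nuX :: "'a::unital_semiring set" where
  "nuX = {a. a = a + a}"

definition semiring_hom :: "('a::unital_semiring \<Rightarrow> 'b::unital_semiring) \<Rightarrow> bool" where
  "semiring_hom f \<longleftrightarrow> (\<forall>x y. f (x + y) = f x + f y) \<and> f 0 = 0 \<and> (\<forall>x y. f (x * y) = f x * f y)"

definition unital_idempotent_subsemiring :: "'a::unital_semiring set \<Rightarrow> 'a \<Rightarrow> bool" where
  "unital_idempotent_subsemiring S u \<longleftrightarrow>
     0 \<in> S \<and> u \<in> S \<and>
     (\<forall>a\<in>S. \<forall>b\<in>S. a + b \<in> S) \<and> (\<forall>a\<in>S. \<forall>b\<in>S. a * b \<in> S) \<and>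
     (\<forall>a\<in>S. u * a = a \<and> a * u = a) \<and> (\<forall>a\<in>S. a + a = a)"

end

theory Submission
  imports Defs
begin

lemma nu_l: "nu (x::'a::unital_semiring) = (1+1) * x"
  by (simp add: nu_def distrib_right)
lemma nu_r: "nu (x::'a::unital_semiring) = x * (1+1)"
  by (simp add: nu_def distrib_left)

lemma key: "((1+1::'a::unital_semiring) = 1+1+1+1) \<longleftrightarrow> (\<forall>x::'a. x + x = x+x+x+x)"
proof
  assume h: "(1+1::'a) = 1+1+1+1"
  show "\<forall>x::'a. x + x = x+x+x+x"
  proof
    fix x :: 'a
    have "x + x = (1+1) * x" by (simp add: distrib_right)
    also have "\<dots> = (1+1+1+1) * x" using h by simp
    also have "\<dots> = x+x+x+x" by (simp add: distrib_right)
    finally show "x + x = x+x+x+x" .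
  qed
next
  assume "\<forall>x::'a. x + x = x+x+x+x"
  then show "(1+1::'a) = 1+1+1+1" by blast
qed

theorem proposition5p1:
  defines "two \<equiv> (1 + 1 :: 'a::unital_semiring)" and "four \<equiv> (1 + 1 + 1 + 1 :: 'a)"
  shows "(two = four \<longleftrightarrow> semiring_hom (nu :: 'a \<Rightarrow> 'a))
       \<and> (two = four \<longleftrightarrow> nu \<circ> nu = (nu :: 'a \<Rightarrow> 'a))
       \<and> (two = four \<longleftrightarrow> range (nu :: 'a \<Rightarrow> 'a) = nuX)
       \<and> (two = four \<longrightarrow>
            unital_idempotent_subsemiring (nuX :: 'a set) (nu 1)
            \<and> (\<forall>x::'a. nu x \<in> nuX) \<and> semiring_hom (nu :: 'a \<Rightarrow> 'a))"
proof -
  have K: "two = four \<longleftrightarrow> (\<forall>x::'a. x + x = x+x+x+x)"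
    unfolding two_def four_def by (rule key)
  have mulnu: "nu x * nu y = nu (nu (x * y))" for x y :: 'a
    by (simp add: nu_def distrib_left distrib_right add.assoc)
  have nunu: "nu (nu x) = x+x+x+x" for x :: 'a by (simp add: nu_def add.assoc)
  have hom_easy: "nu (x + y) = nu x + nu y" "nu (0::'a) = 0" for x y :: 'a
    by (simp_all add: nu_def ac_simps)
  have A: "two = four \<longleftrightarrow> semiring_hom (nu :: 'a \<Rightarrow> 'a)"
  proof
    assume "two = four"
    with K have "\<forall>x::'a. x + x = x+x+x+x" by blast
    then show "semiring_hom (nu :: 'a \<Rightarrow> 'a)"
      unfolding semiring_hom_def using hom_easy mulnu nunu by (simp add: nu_def)
  next
    assume "semiring_hom (nu :: 'a \<Rightarrow> 'a)"
    then have "nu (1*1::'a) = nu 1 * nu 1" unfolding semiring_hom_def by blast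
    then have "nu (1::'a) = nu (nu 1)" using mulnu by simp
    then show "two = four" unfolding two_def four_def using nunu by (simp add: nu_def)
  qed
  have B: "two = four \<longleftrightarrow> nu \<circ> nu = (nu :: 'a \<Rightarrow> 'a)"
  proof
    assume "two = four"
    with K show "nu \<circ> nu = (nu :: 'a \<Rightarrow> 'a)" using nunu by (auto simp: nu_def fun_eq_iff)
  next
    assume "nu \<circ> nu = (nu :: 'a \<Rightarrow> 'a)"
    then have "nu (nu (1::'a)) = nu 1" by (metis comp_apply)
    then show "two = four" unfolding two_def four_def using nunu by (simp add: nu_def)
  qed
  have C: "two = four \<longleftrightarrow> range (nu :: 'a \<Rightarrow> 'a) = nuX"
  proof
    assume "two = four"
    with K have h: "\<forall>x::'a. x + x = x+x+x+x" by blast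
    show "range (nu :: 'a \<Rightarrow> 'a) = nuX"
    proof
      show "range (nu :: 'a \<Rightarrow> 'a) \<subseteq> nuX" using h by (auto simp: nuX_def nu_def add.assoc)
      show "nuX \<subseteq> range (nu :: 'a \<Rightarrow> 'a)"
      proof
        fix a :: 'a assume "a \<in> nuX"
        then have "a = nu a" by (simp add: nuX_def nu_def)
        then show "a \<in> range nu" by blast
      qed
    qed
  next
    assume "range (nu :: 'a \<Rightarrow> 'a) = nuX"
    then have "nu (1::'a) \<in> nuX" by blast
    then show "two = four" unfolding two_def four_def by (simp add: nuX_def nu_def add.assoc)
  qed
  have D: "two = four \<longrightarrow>
            unital_idempotent_subsemiring (nuX :: 'a set) (nu 1)
            \<and> (\<forall>x::'a. nu x \<in> nuX) \<and> semiring_hom (nu :: 'a \<Rightarrow> 'a)"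
  proof
    assume e: "two = four"
    with K have h: "\<forall>x::'a. x + x = x+x+x+x" by blast
    have m: "\<forall>x::'a. nu x \<in> nuX" using h by (auto simp: nuX_def nu_def add.assoc)
    have "unital_idempotent_subsemiring (nuX :: 'a set) (nu 1)"
      unfolding unital_idempotent_subsemiring_def
    proof (intro conjI ballI)
      show "0 \<in> (nuX::'a set)" by (simp add: nuX_def)
      show "nu 1 \<in> (nuX::'a set)" using m by blast
    next
      fix a b :: 'a assume "a \<in> nuX" "b \<in> nuX"
      then have a: "a = a + a" and b: "b = b + b" by (auto simp: nuX_def)
      have "a + b + (a + b) = (a + a) + (b + b)" by (simp add: ac_simps)
      then show "a + b \<in> nuX" using a b by (simp add: nuX_def)
      have "a * b + a * b = a * b" using a by (metis distrib_right)
      then show "a * b \<in> nuX" by (simp add: nuX_def)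
    next
      fix a :: 'a assume "a \<in> nuX"
      then have a: "a = a + a" by (auto simp: nuX_def)
      show "nu 1 * a = a" using a by (simp add: nu_def distrib_right)
      show "a * nu 1 = a" using a by (simp add: nu_def distrib_left)
      show "a + a = a" using a by simp
    qed
    then show "unital_idempotent_subsemiring (nuX :: 'a set) (nu 1)
            \<and> (\<forall>x::'a. nu x \<in> nuX) \<and> semiring_hom (nu :: 'a \<Rightarrow> 'a)"
      using m A e by blast
  qed
  show ?thesis using A B C D by blast
qed

end
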